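(* Let $(M,\tau)$ be a tracial von Neumann algebra, $p\geq2$, $\xi_1,\dots,\xi_p\in M$ self-adjoint with $\|\xi_i\|_\infty\leq1$, and $\alpha_1,\dots,\alpha_p\in\mathbb R$. Let $\delta\in(0,1)$ and $\varepsilon\in(0,\frac{\delta^2}{p-1})$. Assume $\|\xi_i\|_2\geq\delta$ for every $1\leq i\leq p$, and $|\langle\xi_i,\xi_j\rangle|\leq\varepsilon$ for every $1\leq i<j\leq p$. Then there exists $h\in M$ with $h=h^*$, $\|h\|_\infty\leq\frac{\sum_{j=1}^p|\alpha_j|}{\delta^2-(p-1)\varepsilon}$ and $\tau(h\xi_i)=\alpha_i$ for every $1\leq i\leq p$.
   Context: $\langle a,b\rangle=\tau(b^*a)$ and $\|a\|_2=\tau(a^*a)^{1/2}$. *)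

theory Defs
  imports "HOL-Analysis.Analysis"
begin

text \<open>An abstract tracial von Neumann algebra (M, tau), presented as a unital complex
C*-algebra (all of the carrier type) equipped with a faithful tracial state tau,
which is monotone complete and for which tau is normal.  By Kadison's theorem a
monotone complete C*-algebra with a separating family of normal states (here the
faithful normal state tau) is a W*-algebra, i.e. a von Neumann algebra.\<close>

record 'a tvna =
  add :: "'a \<Rightarrow> 'a \<Rightarrow> 'a"
  zero :: 'a
  neg :: "'a \<Rightarrow> 'a"
  mul :: "'a \<Rightarrow> 'a \<Rightarrow> 'a"
  one :: 'a
  smul :: "complex \<Rightarrow> 'a \<Rightarrow> 'a"
  star :: "'a \<Rightarrow> 'a"
  nrm :: "'a \<Rightarrow> real"
  tr :: "'a \<Rightarrow> complex"

definition self_adj :: "'a tvna \<Rightarrow> 'a \<Rightarrow> bool" where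
  "self_adj T x \<longleftrightarrow> star T x = x"

definition positive :: "'a tvna \<Rightarrow> 'a \<Rightarrow> bool" where
  "positive T x \<longleftrightarrow> (\<exists>y. x = mul T (star T y) y)"

definition op_le :: "'a tvna \<Rightarrow> 'a \<Rightarrow> 'a \<Rightarrow> bool" where
  "op_le T x y \<longleftrightarrow> positive T (add T y (neg T x))"

definition tinner :: "'a tvna \<Rightarrow> 'a \<Rightarrow> 'a \<Rightarrow> complex" where
  "tinner T a b = tr T (mul T (star T b) a)"

definition norm2 :: "'a tvna \<Rightarrow> 'a \<Rightarrow> real" where
  "norm2 T a = sqrt (Re (tr T (mul T (star T a) a)))"

definition tracial_vna :: "'a tvna \<Rightarrow> bool" where
  "tracial_vna T \<longleftrightarrow>
    \<comment> \<open>complex vector space\<close>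
    (\<forall>x y z. add T (add T x y) z = add T x (add T y z)) \<and>
    (\<forall>x y. add T x y = add T y x) \<and>
    (\<forall>x. add T (zero T) x = x) \<and>
    (\<forall>x. add T x (neg T x) = zero T) \<and>
    (\<forall>a x y. smul T a (add T x y) = add T (smul T a x) (smul T a y)) \<and>
    (\<forall>a b x. smul T (a + b) x = add T (smul T a x) (smul T b x)) \<and>
    (\<forall>a b x. smul T a (smul T b x) = smul T (a * b) x) \<and>
    (\<forall>x. smul T 1 x = x) \<and>
    \<comment> \<open>unital associative algebra\<close>
    (\<forall>x y z. mul T (mul T x y) z = mul T x (mul T y z)) \<and>
    (\<forall>x y z. mul T x (add T y z) = add T (mul T x y) (mul T x z)) \<and>
    (\<forall>x y z. mul T (add T x y) z = add T (mul T x z) (mul T y z)) \<and>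
    (\<forall>a x y. mul T (smul T a x) y = smul T a (mul T x y)) \<and>
    (\<forall>a x y. mul T x (smul T a y) = smul T a (mul T x y)) \<and>
    (\<forall>x. mul T (one T) x = x \<and> mul T x (one T) = x) \<and>
    \<comment> \<open>involution\<close>
    (\<forall>x. star T (star T x) = x) \<and>
    (\<forall>x y. star T (add T x y) = add T (star T x) (star T y)) \<and>
    (\<forall>a x. star T (smul T a x) = smul T (cnj a) (star T x)) \<and>
    (\<forall>x y. star T (mul T x y) = mul T (star T y) (star T x)) \<and>
    \<comment> \<open>C*-norm, complete\<close>
    (\<forall>x. 0 \<le> nrm T x) \<and>
    (\<forall>x. nrm T x = 0 \<longleftrightarrow> x = zero T) \<and>
    (\<forall>x y. nrm T (add T x y) \<le> nrm T x + nrm T y) \<and>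
    (\<forall>a x. nrm T (smul T a x) = cmod a * nrm T x) \<and>
    (\<forall>x y. nrm T (mul T x y) \<le> nrm T x * nrm T y) \<and>
    (\<forall>x. nrm T (mul T (star T x) x) = (nrm T x)\<^sup>2) \<and>
    (\<forall>f :: nat \<Rightarrow> 'a.
        (\<forall>e>0. \<exists>N. \<forall>m n. N \<le> m \<longrightarrow> N \<le> n \<longrightarrow> nrm T (add T (f m) (neg T (f n))) < e)
        \<longrightarrow> (\<exists>l. (\<lambda>n. nrm T (add T (f n) (neg T l))) \<longlonglongrightarrow> 0)) \<and>
    \<comment> \<open>faithful tracial state\<close>
    (\<forall>x y. tr T (add T x y) = tr T x + tr T y) \<and>
    (\<forall>a x. tr T (smul T a x) = a * tr T x) \<and>
    tr T (one T) = 1 \<and>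
    (\<forall>x y. tr T (mul T x y) = tr T (mul T y x)) \<and>
    (\<forall>x. Im (tr T (mul T (star T x) x)) = 0 \<and> 0 \<le> Re (tr T (mul T (star T x) x))) \<and>
    (\<forall>x. tr T (mul T (star T x) x) = 0 \<longrightarrow> x = zero T) \<and>
    \<comment> \<open>monotone completeness, and normality of the trace\<close>
    (\<forall>D. D \<noteq> {} \<and> (\<forall>x\<in>D. self_adj T x) \<and>
         (\<forall>x\<in>D. \<forall>y\<in>D. \<exists>z\<in>D. op_le T x z \<and> op_le T y z) \<and>
         (\<exists>C. \<forall>x\<in>D. nrm T x \<le> C)
       \<longrightarrow> (\<exists>s. self_adj T s \<and> (\<forall>x\<in>D. op_le T x s) \<and>
               (\<forall>u. self_adj T u \<and> (\<forall>x\<in>D. op_le T x u) \<longrightarrow> op_le T s u) \<and>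
               Re (tr T s) = (SUP x\<in>D. Re (tr T x))))"

end

theory Submission
  imports Defs "Jordan_Normal_Form.Determinant"
begin


context fixes T :: "'a tvna" assumes A: "tracial_vna T" begin

lemmas ax = A[unfolded tracial_vna_def]


lemmas add_assoc' = ax[THEN conjunct1, rule_format]
lemmas add_comm' = ax[THEN conjunct2, THEN conjunct1, rule_format]
lemmas add_zero' = ax[THEN conjunct2, THEN conjunct2, THEN conjunct1, rule_format]
lemmas add_neg' = ax[THEN conjunct2, THEN conjunct2, THEN conjunct2, THEN conjunct1, rule_format]
lemmas smul_add' = ax[THEN conjunct2, THEN conjunct2, THEN conjunct2, THEN conjunct2, THEN conjunct1, rule_format]
lemmas add_smul' = ax[THEN conjunct2, THEN conjunct2, THEN conjunct2, THEN conjunct2, THEN conjunct2, THEN conjunct1, rule_format]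
lemmas smul_smul' = ax[THEN conjunct2, THEN conjunct2, THEN conjunct2, THEN conjunct2, THEN conjunct2, THEN conjunct2, THEN conjunct1, rule_format]
lemmas mul_add' = ax[THEN conjunct2, THEN conjunct2, THEN conjunct2, THEN conjunct2, THEN conjunct2, THEN conjunct2, THEN conjunct2, THEN conjunct2, THEN conjunct2, THEN conjunct1, rule_format]
lemmas add_mul' = ax[THEN conjunct2, THEN conjunct2, THEN conjunct2, THEN conjunct2, THEN conjunct2, THEN conjunct2, THEN conjunct2, THEN conjunct2, THEN conjunct2, THEN conjunct2, THEN conjunct1, rule_format]
lemmas smul_mul' = ax[THEN conjunct2, THEN conjunct2, THEN conjunct2, THEN conjunct2, THEN conjunct2, THEN conjunct2, THEN conjunct2, THEN conjunct2, THEN conjunct2, THEN conjunct2, THEN conjunct2, THEN conjunct1, rule_format]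
lemmas mul_smul' = ax[THEN conjunct2, THEN conjunct2, THEN conjunct2, THEN conjunct2, THEN conjunct2, THEN conjunct2, THEN conjunct2, THEN conjunct2, THEN conjunct2, THEN conjunct2, THEN conjunct2, THEN conjunct2, THEN conjunct1, rule_format]
lemmas star_star' = ax[THEN conjunct2, THEN conjunct2, THEN conjunct2, THEN conjunct2, THEN conjunct2, THEN conjunct2, THEN conjunct2, THEN conjunct2, THEN conjunct2, THEN conjunct2, THEN conjunct2, THEN conjunct2, THEN conjunct2, THEN conjunct2, THEN conjunct1, rule_format]
lemmas star_add' = ax[THEN conjunct2, THEN conjunct2, THEN conjunct2, THEN conjunct2, THEN conjunct2, THEN conjunct2, THEN conjunct2, THEN conjunct2, THEN conjunct2, THEN conjunct2, THEN conjunct2, THEN conjunct2, THEN conjunct2, THEN conjunct2, THEN conjunct2, THEN conjunct1, rule_format]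
lemmas star_smul' = ax[THEN conjunct2, THEN conjunct2, THEN conjunct2, THEN conjunct2, THEN conjunct2, THEN conjunct2, THEN conjunct2, THEN conjunct2, THEN conjunct2, THEN conjunct2, THEN conjunct2, THEN conjunct2, THEN conjunct2, THEN conjunct2, THEN conjunct2, THEN conjunct2, THEN conjunct1, rule_format]
lemmas star_mul' = ax[THEN conjunct2, THEN conjunct2, THEN conjunct2, THEN conjunct2, THEN conjunct2, THEN conjunct2, THEN conjunct2, THEN conjunct2, THEN conjunct2, THEN conjunct2, THEN conjunct2, THEN conjunct2, THEN conjunct2, THEN conjunct2, THEN conjunct2, THEN conjunct2, THEN conjunct2, THEN conjunct1, rule_format]
lemmas nrm_nonneg' = ax[THEN conjunct2, THEN conjunct2, THEN conjunct2, THEN conjunct2, THEN conjunct2, THEN conjunct2, THEN conjunct2, THEN conjunct2, THEN conjunct2, THEN conjunct2, THEN conjunct2, THEN conjunct2, THEN conjunct2, THEN conjunct2, THEN conjunct2, THEN conjunct2, THEN conjunct2, THEN conjunct2, THEN conjunct1, rule_format]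
lemmas nrm_zero_iff' = ax[THEN conjunct2, THEN conjunct2, THEN conjunct2, THEN conjunct2, THEN conjunct2, THEN conjunct2, THEN conjunct2, THEN conjunct2, THEN conjunct2, THEN conjunct2, THEN conjunct2, THEN conjunct2, THEN conjunct2, THEN conjunct2, THEN conjunct2, THEN conjunct2, THEN conjunct2, THEN conjunct2, THEN conjunct2, THEN conjunct1, rule_format]
lemmas nrm_tri' = ax[THEN conjunct2, THEN conjunct2, THEN conjunct2, THEN conjunct2, THEN conjunct2, THEN conjunct2, THEN conjunct2, THEN conjunct2, THEN conjunct2, THEN conjunct2, THEN conjunct2, THEN conjunct2, THEN conjunct2, THEN conjunct2, THEN conjunct2, THEN conjunct2, THEN conjunct2, THEN conjunct2, THEN conjunct2, THEN conjunct2, THEN conjunct1, rule_format]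
lemmas nrm_smul' = ax[THEN conjunct2, THEN conjunct2, THEN conjunct2, THEN conjunct2, THEN conjunct2, THEN conjunct2, THEN conjunct2, THEN conjunct2, THEN conjunct2, THEN conjunct2, THEN conjunct2, THEN conjunct2, THEN conjunct2, THEN conjunct2, THEN conjunct2, THEN conjunct2, THEN conjunct2, THEN conjunct2, THEN conjunct2, THEN conjunct2, THEN conjunct2, THEN conjunct1, rule_format]
lemmas tr_add' = ax[THEN conjunct2, THEN conjunct2, THEN conjunct2, THEN conjunct2, THEN conjunct2, THEN conjunct2, THEN conjunct2, THEN conjunct2, THEN conjunct2, THEN conjunct2, THEN conjunct2, THEN conjunct2, THEN conjunct2, THEN conjunct2, THEN conjunct2, THEN conjunct2, THEN conjunct2, THEN conjunct2, THEN conjunct2, THEN conjunct2, THEN conjunct2, THEN conjunct2, THEN conjunct2, THEN conjunct2, THEN conjunct2, THEN conjunct1, rule_format]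
lemmas tr_smul' = ax[THEN conjunct2, THEN conjunct2, THEN conjunct2, THEN conjunct2, THEN conjunct2, THEN conjunct2, THEN conjunct2, THEN conjunct2, THEN conjunct2, THEN conjunct2, THEN conjunct2, THEN conjunct2, THEN conjunct2, THEN conjunct2, THEN conjunct2, THEN conjunct2, THEN conjunct2, THEN conjunct2, THEN conjunct2, THEN conjunct2, THEN conjunct2, THEN conjunct2, THEN conjunct2, THEN conjunct2, THEN conjunct2, THEN conjunct2, THEN conjunct1, rule_format]
lemmas tr_comm' = ax[THEN conjunct2, THEN conjunct2, THEN conjunct2, THEN conjunct2, THEN conjunct2, THEN conjunct2, THEN conjunct2, THEN conjunct2, THEN conjunct2, THEN conjunct2, THEN conjunct2, THEN conjunct2, THEN conjunct2, THEN conjunct2, THEN conjunct2, THEN conjunct2, THEN conjunct2, THEN conjunct2, THEN conjunct2, THEN conjunct2, THEN conjunct2, THEN conjunct2, THEN conjunct2, THEN conjunct2, THEN conjunct2, THEN conjunct2, THEN conjunct2, THEN conjunct2, THEN conjunct1, rule_format]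
lemmas tr_pos' = ax[THEN conjunct2, THEN conjunct2, THEN conjunct2, THEN conjunct2, THEN conjunct2, THEN conjunct2, THEN conjunct2, THEN conjunct2, THEN conjunct2, THEN conjunct2, THEN conjunct2, THEN conjunct2, THEN conjunct2, THEN conjunct2, THEN conjunct2, THEN conjunct2, THEN conjunct2, THEN conjunct2, THEN conjunct2, THEN conjunct2, THEN conjunct2, THEN conjunct2, THEN conjunct2, THEN conjunct2, THEN conjunct2, THEN conjunct2, THEN conjunct2, THEN conjunct2, THEN conjunct2, THEN conjunct1, rule_format, THEN conjunct1]

lemma smul0: "smul T 0 x = tvna.zero T"
proof -
  let ?z = "smul T 0 x"
  have zz: "tvna.add T ?z ?z = ?z" using add_smul'[of 0 0 x] by simp
  have "tvna.zero T = tvna.add T ?z (neg T ?z)" by (simp add: add_neg')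
  also have "\<dots> = tvna.add T (tvna.add T ?z ?z) (neg T ?z)" using zz by simp
  also have "\<dots> = ?z" by (simp add: add_assoc' add_neg' add_comm'[of ?z "tvna.zero T"] add_zero')
  finally show ?thesis by simp
qed

lemma star_zero': "star T (tvna.zero T) = tvna.zero T"
  using star_smul'[of 0 "tvna.zero T"] smul0 by simp
lemma tr_zero': "tr T (tvna.zero T) = 0"
  using tr_smul'[of 0 "tvna.zero T"] smul0 by simp
lemma mul_zero': "mul T (tvna.zero T) y = tvna.zero T"
  using smul_mul'[of 0 "tvna.zero T" y] smul0 by simp
lemma nrm_zero': "nrm T (tvna.zero T) = 0" using nrm_zero_iff' by simp

lemma polar: "tr T (mul T (star T a) b) = cnj (tr T (mul T (star T b) a))"
proof -
  have e: "tr T (mul T (star T (tvna.add T a (smul T w b))) (tvna.add T a (smul T w b)))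
     = tr T (mul T (star T a) a) + w * tr T (mul T (star T a) b) + cnj w * tr T (mul T (star T b) a)
       + (cnj w * w) * tr T (mul T (star T b) b)" for w
    by (simp add: star_add' star_smul' mul_add' add_mul' smul_mul' mul_smul' tr_add' tr_smul' smul_smul' algebra_simps)
  have i1: "Im (tr T (mul T (star T a) b) + tr T (mul T (star T b) a)) = 0"
    using e[of 1] tr_pos'[of a] tr_pos'[of b] tr_pos'[of "tvna.add T a (smul T 1 b)"] by simp
  have i2: "Re (tr T (mul T (star T a) b)) = Re (tr T (mul T (star T b) a))"
    using e[of \<i>] tr_pos'[of a] tr_pos'[of b] tr_pos'[of "tvna.add T a (smul T \<i> b)"] by simp
  show ?thesis using i1 i2 by (simp add: complex_eq_iff)
qed

primrec hs :: "(nat \<Rightarrow> real) \<Rightarrow> (nat \<Rightarrow> 'a) \<Rightarrow> nat \<Rightarrow> 'a" where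
  "hs c x 0 = tvna.zero T"
| "hs c x (Suc n) = tvna.add T (hs c x n) (smul T (complex_of_real (c n)) (x n))"

lemma hs_sa: "(\<forall>k<n. star T (x k) = x k) \<Longrightarrow> star T (hs c x n) = hs c x n"
  by (induction n) (auto simp: star_zero' star_add' star_smul')

lemma hs_tr: "tr T (mul T (hs c x n) y) = (\<Sum>k<n. complex_of_real (c k) * tr T (mul T (x k) y))"
  by (induction n) (auto simp: mul_zero' tr_zero' add_mul' tr_add' smul_mul' tr_smul')

lemma hs_nrm: "nrm T (hs c x n) \<le> (\<Sum>k<n. \<bar>c k\<bar> * nrm T (x k))"
proof (induction n)
  case 0 then show ?case by (simp add: nrm_zero')
next
  case (Suc n)
  have "nrm T (hs c x (Suc n)) \<le> nrm T (hs c x n) + \<bar>c n\<bar> * nrm T (x n)"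
    using nrm_tri'[of "hs c x n" "smul T (complex_of_real (c n)) (x n)"]
      nrm_smul'[of "complex_of_real (c n)" "x n"] by simp
  then show ?case using Suc by simp
qed

end


lemma solve_lin:
  fixes g :: "nat \<Rightarrow> nat \<Rightarrow> real"
  assumes inj: "\<And>c. (\<forall>i<p. (\<Sum>j<p. g i j * c j) = 0) \<Longrightarrow> (\<forall>j<p. c j = 0)"
  shows "\<exists>c. \<forall>i<p. (\<Sum>j<p. g i j * c j) = b i"
proof -
  define A where "A = mat p p (\<lambda>(i,j). g i j)"
  have Ac: "A \<in> carrier_mat p p" unfolding A_def by simp
  have mv: "vec_index (A *\<^sub>v v) i = (\<Sum>j<p. g i j * vec_index v j)" if "v \<in> carrier_vec p" "i < p" for v i
    using that unfolding A_def by (auto simp: scalar_prod_def lessThan_atLeast0 intro!: sum.cong)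
  have "det A \<noteq> 0"
  proof
    assume "det A = 0"
    then obtain v where v: "v \<in> carrier_vec p" "v \<noteq> 0\<^sub>v p" "A *\<^sub>v v = 0\<^sub>v p"
      using det_0_iff_vec_prod_zero[OF Ac] by auto
    have "\<forall>i<p. (\<Sum>j<p. g i j * vec_index v j) = 0"
      using mv[OF v(1)] v(3) by (metis index_zero_vec(1))
    then have "\<forall>j<p. vec_index v j = 0" using inj by blast
    then have "v = 0\<^sub>v p" using v(1) by (intro eq_vecI) auto
    with v(2) show False by simp
  qed
  then have "A \<in> Units (ring_mat TYPE(real) p ())" by (rule det_non_zero_imp_unit[OF Ac])
  then obtain B where B: "B \<in> carrier_mat p p" "A * B = 1\<^sub>m p"
    unfolding Units_def by (auto simp: ring_mat_simps)
  have "A *\<^sub>v (B *\<^sub>v vec p b) = vec p b"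
    using B Ac by (simp add: assoc_mult_mat_vec[symmetric, of A p p B p "vec p b"])
  then have "vec_index (A *\<^sub>v (B *\<^sub>v vec p b)) i = b i" if "i < p" for i using that by simp
  moreover have "B *\<^sub>v vec p b \<in> carrier_vec p" using B by simp
  ultimately show ?thesis using mv by metis
qed

lemma diagdom:
  fixes g :: "nat \<Rightarrow> nat \<Rightarrow> real" and c :: "nat \<Rightarrow> real"
  assumes dg: "\<forall>i<p. d \<le> g i i" and og: "\<forall>i<p. \<forall>j<p. i \<noteq> j \<longrightarrow> \<bar>g i j\<bar> \<le> e"
  shows "(d - (real p - 1) * e) * (\<Sum>j<p. \<bar>c j\<bar>) \<le> (\<Sum>i<p. \<bar>\<Sum>j<p. g i j * c j\<bar>)"
proof -
  define S where "S = (\<Sum>j<p. \<bar>c j\<bar>)"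
  have row: "d * \<bar>c i\<bar> - e * S + e * \<bar>c i\<bar> \<le> \<bar>\<Sum>j<p. g i j * c j\<bar>" if i: "i < p" for i
  proof -
    have sp: "(\<Sum>j<p. g i j * c j) = g i i * c i + (\<Sum>j\<in>{..<p}-{i}. g i j * c j)"
      using i by (simp add: sum.remove)
    have Sp: "S = \<bar>c i\<bar> + (\<Sum>j\<in>{..<p}-{i}. \<bar>c j\<bar>)"
      unfolding S_def using i by (simp add: sum.remove)
    have "\<bar>\<Sum>j\<in>{..<p}-{i}. g i j * c j\<bar> \<le> (\<Sum>j\<in>{..<p}-{i}. \<bar>g i j * c j\<bar>)"
      by (rule sum_abs)
    also have "\<dots> \<le> (\<Sum>j\<in>{..<p}-{i}. e * \<bar>c j\<bar>)"
    proof (rule sum_mono)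
      fix j assume "j \<in> {..<p}-{i}"
      then have "\<bar>g i j\<bar> \<le> e" using og i by auto
      then show "\<bar>g i j * c j\<bar> \<le> e * \<bar>c j\<bar>" by (simp add: abs_mult mult_right_mono)
    qed
    also have "\<dots> = e * (S - \<bar>c i\<bar>)" using Sp by (simp add: sum_distrib_left)
    finally have b1: "\<bar>\<Sum>j\<in>{..<p}-{i}. g i j * c j\<bar> \<le> e * (S - \<bar>c i\<bar>)" .
    have b2: "d * \<bar>c i\<bar> \<le> \<bar>g i i * c i\<bar>"
    proof -
      have "d * \<bar>c i\<bar> \<le> g i i * \<bar>c i\<bar>" using dg i by (simp add: mult_right_mono)
      also have "\<dots> \<le> \<bar>g i i * c i\<bar>" by (simp add: abs_mult mult_right_mono)
      finally show ?thesis .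
    qed
    show ?thesis using sp b1 b2 by (simp add: algebra_simps)
  qed
  have "(\<Sum>i<p. d * \<bar>c i\<bar> - e * S + e * \<bar>c i\<bar>) \<le> (\<Sum>i<p. \<bar>\<Sum>j<p. g i j * c j\<bar>)"
    by (rule sum_mono) (simp add: row)
  moreover have "(\<Sum>i<p. d * \<bar>c i\<bar> - e * S + e * \<bar>c i\<bar>) = (d - (real p - 1) * e) * S"
    unfolding S_def by (simp add: sum.distrib sum_subtractf sum_distrib_left algebra_simps)
  ultimately show ?thesis unfolding S_def by simp
qed

lemma sum_shift1: "(\<Sum>j=1..p. f j) = (\<Sum>i<p. f (Suc i) :: real)"
  by (induction p) auto

theorem lemma5p3:
  fixes T :: "'a tvna" and p :: nat and xi :: "nat \<Rightarrow> 'a" and alpha :: "nat \<Rightarrow> real"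
    and \<delta> \<epsilon> :: real
  assumes "tracial_vna T"
    and "p \<ge> 2"
    and "\<forall>i\<in>{1..p}. self_adj T (xi i) \<and> nrm T (xi i) \<le> 1"
    and "0 < \<delta>" and "\<delta> < 1"
    and "0 < \<epsilon>" and "\<epsilon> < \<delta>\<^sup>2 / (real p - 1)"
    and "\<forall>i\<in>{1..p}. norm2 T (xi i) \<ge> \<delta>"
    and "\<forall>i j. 1 \<le> i \<and> i < j \<and> j \<le> p \<longrightarrow> cmod (tinner T (xi i) (xi j)) \<le> \<epsilon>"
  shows "\<exists>h. self_adj T h \<and>
           nrm T h \<le> (\<Sum>j=1..p. \<bar>alpha j\<bar>) / (\<delta>\<^sup>2 - (real p - 1) * \<epsilon>) \<and>
           (\<forall>i\<in>{1..p}. tr T (mul T h (xi i)) = complex_of_real (alpha i))"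
proof -
  note Ax = assms(1)
  define x where "x k = xi (Suc k)" for k
  define g where "g i j = Re (tr T (mul T (x j) (x i)))" for i j
  have sa: "star T (x k) = x k" if "k < p" for k
    using assms(3) that unfolding x_def self_adj_def by auto
  have nx: "nrm T (x k) \<le> 1" if "k < p" for k
    using assms(3) that unfolding x_def by auto
  have greal: "tr T (mul T (x j) (x i)) = complex_of_real (g i j)" if "i < p" "j < p" for i j
  proof -
    have "tr T (mul T (x j) (x i)) = cnj (tr T (mul T (x i) (x j)))"
      using polar[OF Ax, of "x j" "x i"] sa that by simp
    also have "\<dots> = cnj (tr T (mul T (x j) (x i)))" using tr_comm'[OF Ax] by metis
    finally have "Im (tr T (mul T (x j) (x i))) = 0" by (simp add: complex_eq_iff)
    then show ?thesis unfolding g_def by (simp add: complex_eq_iff)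
  qed
  have gdiag: "\<delta>\<^sup>2 \<le> g i i" if "i < p" for i
  proof -
    have "\<delta> \<le> norm2 T (xi (Suc i))" using assms(8) that by auto
    then have "sqrt (\<delta>\<^sup>2) \<le> sqrt (g i i)"
      using assms(4) sa[OF that] unfolding norm2_def g_def x_def by simp
    then show ?thesis using real_sqrt_le_iff by blast
  qed
  have gsym: "g i j = g j i" for i j unfolding g_def using tr_comm'[OF Ax] by metis
  have goff1: "\<bar>g i j\<bar> \<le> \<epsilon>" if "i < j" "j < p" for i j
  proof -
    have "cmod (tinner T (xi (Suc i)) (xi (Suc j))) \<le> \<epsilon>" using assms(9) that by auto
    moreover have "tinner T (xi (Suc i)) (xi (Suc j)) = tr T (mul T (x j) (x i))"
      unfolding tinner_def x_def using sa[of j] that by (simp add: x_def)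
    ultimately show ?thesis unfolding g_def by (metis abs_Re_le_cmod order_trans)
  qed
  have goff: "\<forall>i<p. \<forall>j<p. i \<noteq> j \<longrightarrow> \<bar>g i j\<bar> \<le> \<epsilon>"
  proof (intro allI impI)
    fix i j assume "i < p" "j < p" "i \<noteq> j"
    then show "\<bar>g i j\<bar> \<le> \<epsilon>" using goff1[of i j] goff1[of j i] gsym[of i j]
      by (cases "i < j") auto
  qed
  define D where "D = \<delta>\<^sup>2 - (real p - 1) * \<epsilon>"
  have Dpos: "0 < D"
  proof -
    have "real p - 1 > 0" using assms(2) by simp
    then have "(real p - 1) * \<epsilon> < \<delta>\<^sup>2" using assms(7) by (simp add: field_simps)
    then show ?thesis unfolding D_def by simp
  qed
  have dd: "D * (\<Sum>j<p. \<bar>c j\<bar>) \<le> (\<Sum>i<p. \<bar>\<Sum>j<p. g i j * c j\<bar>)" for c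
    unfolding D_def by (rule diagdom) (use gdiag goff in auto)
  have inj: "\<forall>j<p. c j = 0" if "\<forall>i<p. (\<Sum>j<p. g i j * c j) = 0" for c
  proof -
    have "D * (\<Sum>j<p. \<bar>c j\<bar>) \<le> 0" using dd[of c] that by simp
    then have "(\<Sum>j<p. \<bar>c j\<bar>) \<le> 0" using Dpos by (simp add: mult_le_0_iff)
    then have "(\<Sum>j<p. \<bar>c j\<bar>) = 0" by (meson order_antisym sum_nonneg abs_ge_zero)
    then show ?thesis by (simp add: sum_nonneg_eq_0_iff)
  qed
  have "\<exists>c. \<forall>i<p. (\<Sum>j<p. g i j * c j) = alpha (Suc i)"
    by (rule solve_lin) (rule inj)
  then obtain c where c: "\<forall>i<p. (\<Sum>j<p. g i j * c j) = alpha (Suc i)" by blast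
  define h where "h = hs T c x p"
  have "self_adj T h" unfolding h_def self_adj_def by (rule hs_sa[OF Ax]) (simp add: sa)
  moreover have "\<forall>i\<in>{1..p}. tr T (mul T h (xi i)) = complex_of_real (alpha i)"
  proof
    fix i assume i: "i \<in> {1..p}"
    then obtain i' where i': "i = Suc i'" "i' < p" by (cases i) auto
    have "tr T (mul T h (xi i)) = (\<Sum>k<p. complex_of_real (c k) * tr T (mul T (x k) (x i')))"
      unfolding h_def hs_tr[OF Ax] using i' by (simp add: x_def)
    also have "\<dots> = (\<Sum>k<p. complex_of_real (g i' k * c k))"
      using greal i' by (intro sum.cong) auto
    also have "\<dots> = complex_of_real (alpha i)" using c i' by (simp del: of_real_mult add: of_real_sum[symmetric])
    finally show "tr T (mul T h (xi i)) = complex_of_real (alpha i)" .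
  qed
  moreover have "nrm T h \<le> (\<Sum>j=1..p. \<bar>alpha j\<bar>) / D"
  proof -
    have "nrm T h \<le> (\<Sum>k<p. \<bar>c k\<bar> * nrm T (x k))" unfolding h_def by (rule hs_nrm[OF Ax])
    also have "\<dots> \<le> (\<Sum>k<p. \<bar>c k\<bar>)"
      by (rule sum_mono) (use nx in \<open>auto intro: mult_left_le\<close>)
    also have "\<dots> \<le> (\<Sum>j=1..p. \<bar>alpha j\<bar>) / D"
    proof -
      have "D * (\<Sum>k<p. \<bar>c k\<bar>) \<le> (\<Sum>i<p. \<bar>alpha (Suc i)\<bar>)" using dd[of c] c by simp
      moreover have "(\<Sum>j=1..p. \<bar>alpha j\<bar>) = (\<Sum>i<p. \<bar>alpha (Suc i)\<bar>)" by (rule sum_shift1)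
      ultimately show ?thesis using Dpos by (simp add: field_simps)
    qed
    finally show ?thesis .
  qed
  ultimately show ?thesis unfolding D_def by blast
qed

end
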